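(* Let $S>0$, $I\ge1$, $J\in\{1,\dots,I\}$, $N_1,\dots,N_I$ positive integers and $\theta_1>\dots>\theta_I>0$. Consider the partial price differentiation problem: maximize $\sum_{i=1}^I n_ip_is_i$ over prices $p^1,\dots,p^J>0$, assignments $a_i^j\in\{0,1\}$ with $\sum_{j=1}^J a_i^j=1$ for each $i$, and $n_i\in\{0,\dots,N_i\}$, subject to $p_i=\sum_{j=1}^J a_i^jp^j$, $s_i=(\theta_i/p_i-1)^+$ for each $i$, and $\sum_{i=1}^I n_is_i\le S$. Call group $i$ effective in a feasible solution if $n_is_i>0$. Then at any optimal solution of this problem, the set of effective groups is $\{1,2,\dots,K\}$ for some integer $K$.
   Context: Group $i$ consists of $N_i$ users each with utility $\theta_i\ln(1+s)$; a user facing unit price $p$ demands $(\theta_i/p-1)^+$, where $(x)^+=\max(x,0)$. The service provider has total resource $S$ and may use at most $J$ distinct unit prices, each group being charged one of them. *)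

theory Defs
  imports Complex_Main
begin

definition pos_part :: "real \<Rightarrow> real" where
  "pos_part x = max x 0"

definition group_price :: "nat \<Rightarrow> (nat \<Rightarrow> real) \<Rightarrow> (nat \<Rightarrow> nat \<Rightarrow> real) \<Rightarrow> nat \<Rightarrow> real" where
  "group_price J p a i = (\<Sum>j=1..J. a i j * p j)"

definition demand :: "nat \<Rightarrow> (nat \<Rightarrow> real) \<Rightarrow> (nat \<Rightarrow> real) \<Rightarrow> (nat \<Rightarrow> nat \<Rightarrow> real) \<Rightarrow> nat \<Rightarrow> real" where
  "demand J theta p a i = pos_part (theta i / group_price J p a i - 1)"

definition feasible ::
  "real \<Rightarrow> nat \<Rightarrow> nat \<Rightarrow> (nat \<Rightarrow> nat) \<Rightarrow> (nat \<Rightarrow> real)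
   \<Rightarrow> (nat \<Rightarrow> real) \<Rightarrow> (nat \<Rightarrow> nat \<Rightarrow> real) \<Rightarrow> (nat \<Rightarrow> nat) \<Rightarrow> bool" where
  "feasible S I J N theta p a n \<longleftrightarrow>
     (\<forall>j\<in>{1..J}. p j > 0) \<and>
     (\<forall>i\<in>{1..I}. \<forall>j\<in>{1..J}. a i j \<in> {0, 1}) \<and>
     (\<forall>i\<in>{1..I}. (\<Sum>j=1..J. a i j) = 1) \<and>
     (\<forall>i\<in>{1..I}. n i \<le> N i) \<and>
     (\<Sum>i=1..I. real (n i) * demand J theta p a i) \<le> S"

definition revenue ::
  "nat \<Rightarrow> nat \<Rightarrow> (nat \<Rightarrow> real) \<Rightarrow> (nat \<Rightarrow> real) \<Rightarrow> (nat \<Rightarrow> nat \<Rightarrow> real) \<Rightarrow> (nat \<Rightarrow> nat) \<Rightarrow> real" where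
  "revenue I J theta p a n =
     (\<Sum>i=1..I. real (n i) * group_price J p a i * demand J theta p a i)"

definition optimal ::
  "real \<Rightarrow> nat \<Rightarrow> nat \<Rightarrow> (nat \<Rightarrow> nat) \<Rightarrow> (nat \<Rightarrow> real)
   \<Rightarrow> (nat \<Rightarrow> real) \<Rightarrow> (nat \<Rightarrow> nat \<Rightarrow> real) \<Rightarrow> (nat \<Rightarrow> nat) \<Rightarrow> bool" where
  "optimal S I J N theta p a n \<longleftrightarrow>
     feasible S I J N theta p a n \<and>
     (\<forall>p' a' n'. feasible S I J N theta p' a' n' \<longrightarrow>
        revenue I J theta p' a' n' \<le> revenue I J theta p a n)"

definition effective_groups ::
  "nat \<Rightarrow> nat \<Rightarrow> (nat \<Rightarrow> real) \<Rightarrow> (nat \<Rightarrow> real) \<Rightarrow> (nat \<Rightarrow> nat \<Rightarrow> real) \<Rightarrow> (nat \<Rightarrow> nat) \<Rightarrow> nat set" where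
  "effective_groups I J theta p a n = {i\<in>{1..I}. real (n i) * demand J theta p a i > 0}"

end

theory Submission
  imports Defs
begin

lemma row_single:
  fixes c :: "nat \<Rightarrow> real"
  assumes "\<forall>j\<in>{1..J}. c j \<in> {0,1}" "(\<Sum>j=1..J. c j) = 1" "j0 \<in> {1..J}" "c j0 = 1"
  shows "(\<Sum>j=1..J. c j * f j) = f j0"
proof -
  have "(\<Sum>j=1..J. c j) = c j0 + (\<Sum>j\<in>{1..J}-{j0}. c j)"
    using assms(3) by (intro sum.remove) auto
  hence z: "(\<Sum>j\<in>{1..J}-{j0}. c j) = 0" using assms by simp
  have nn: "\<And>j. j \<in> {1..J}-{j0} \<Longrightarrow> 0 \<le> c j" using assms(1) by force
  have "\<forall>j\<in>{1..J}-{j0}. c j = 0" using sum_nonneg_eq_0_iff[of "{1..J}-{j0}" c] z nn by simp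
  then have "(\<Sum>j\<in>{1..J}-{j0}. c j * f j) = 0" by simp
  moreover have "(\<Sum>j=1..J. c j * f j) = c j0 * f j0 + (\<Sum>j\<in>{1..J}-{j0}. c j * f j)"
    using assms(3) by (intro sum.remove) auto
  ultimately show ?thesis using assms by simp
qed

lemma row_exists:
  fixes c :: "nat \<Rightarrow> real"
  assumes "\<forall>j\<in>{1..J}. c j \<in> {0,1}" "(\<Sum>j=1..J. c j) = 1"
  shows "\<exists>j0\<in>{1..J}. c j0 = 1"
proof (rule ccontr)
  assume "\<not> ?thesis"
  then have "\<forall>j\<in>{1..J}. c j = 0" using assms(1) by auto
  then have "(\<Sum>j=1..J. c j) = 0" by simp
  then show False using assms(2) by simp
qed

lemma theta_mono:
  fixes theta :: "nat \<Rightarrow> real"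
  assumes "\<forall>i\<in>{1..<I}. theta i > theta (i + 1)"
  shows "1 \<le> m \<Longrightarrow> m < k \<Longrightarrow> k \<le> I \<Longrightarrow> theta k < theta m"
proof (induction k)
  case 0 then show ?case by simp
next
  case (Suc k)
  have step: "theta (Suc k) < theta k" using assms Suc.prems by force
  show ?case
  proof (cases "m = k")
    case True then show ?thesis using step by simp
  next
    case False
    then have "theta k < theta m" using Suc by simp
    then show ?thesis using step by simp
  qed
qed

lemma key:
  fixes S :: real and I J :: nat and N :: "nat \<Rightarrow> nat" and theta :: "nat \<Rightarrow> real"
    and p :: "nat \<Rightarrow> real" and a :: "nat \<Rightarrow> nat \<Rightarrow> real" and n :: "nat \<Rightarrow> nat"
  assumes feas: "feasible S I J N theta p a n"
    and Npos: "\<forall>i\<in>{1..I}. N i > 0"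
    and iI: "i \<in> {1..I}" and i'I: "i' \<in> {1..I}" and th: "theta i' > theta i"
    and effi: "real (n i) * demand J theta p a i > 0"
    and neff: "\<not> (real (n i') * demand J theta p a i' > 0)"
  shows "\<exists>p' a' n'. feasible S I J N theta p' a' n' \<and>
           revenue I J theta p' a' n' > revenue I J theta p a n"
proof -
  have ppos: "\<forall>j\<in>{1..J}. p j > 0"
    and a01: "\<forall>i\<in>{1..I}. \<forall>j\<in>{1..J}. a i j \<in> {0, 1}"
    and asum: "\<forall>i\<in>{1..I}. (\<Sum>j=1..J. a i j) = 1"
    and nN: "\<forall>i\<in>{1..I}. n i \<le> N i"
    and res: "(\<Sum>i=1..I. real (n i) * demand J theta p a i) \<le> S"
    using feas unfolding feasible_def by auto
  have dnn: "\<And>k. demand J theta p a k \<ge> 0" by (simp add: demand_def pos_part_def)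
  obtain j0 where j0: "j0 \<in> {1..J}" "a i j0 = 1"
    using row_exists[of J "a i"] a01 asum iI by blast
  define p0 where "p0 = p j0"
  have p0pos: "p0 > 0" using ppos j0 p0_def by auto
  have gi: "group_price J p a i = p0"
    unfolding group_price_def p0_def using row_single[of J "a i" j0 p] a01 asum iI j0 by auto
  have ni: "n i \<ge> 1" using effi by (cases "n i") auto
  have di_pos: "demand J theta p a i > 0" using effi dnn
    by (metis mult_eq_0_iff of_nat_0_le_iff order_less_le zero_less_mult_pos)
  have "theta i / p0 - 1 > 0" using di_pos unfolding demand_def gi pos_part_def
    by (simp add: max_def split: if_splits)
  then have thi: "theta i > p0" using p0pos by (simp add: less_divide_eq)
  have di: "demand J theta p a i = theta i / p0 - 1"
    using thi p0pos unfolding demand_def gi pos_part_def by (auto simp: field_simps)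
  have ii': "i \<noteq> i'" using effi neff by auto
  have ri'0: "real (n i') * demand J theta p a i' = 0"
    using neff dnn[of i'] by (metis mult_nonneg_nonneg of_nat_0_le_iff order_less_le)
  define a' where "a' = a(i' := a i)"
  define n' where "n' = n(i := n i - 1, i' := 1)"
  define C where "C = {k\<in>{1..I}. a' k j0 = 1}"
  define D where "D = {1..I} - C"
  define r where "r k = real (n k) * demand J theta p a k" for k
  define A where "A x = (\<Sum>k\<in>C. real (n' k) * pos_part (theta k / x - 1))" for x
  define B where "B = (\<Sum>k\<in>C. r k)"
  define Th where "Th = p0 + (\<Sum>k=1..I. \<bar>theta k\<bar>)"
  have CI: "C \<subseteq> {1..I}" unfolding C_def by auto
  have finC: "finite C" using CI finite_subset by blast
  have a'rows: "\<forall>k\<in>{1..I}. (\<forall>j\<in>{1..J}. a' k j \<in> {0,1}) \<and> (\<Sum>j=1..J. a' k j) = 1"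
    using a01 asum iI unfolding a'_def by auto
  have gC: "group_price J (p(j0:=x)) a' k = x" if "k \<in> C" for k x
  proof -
    have "k \<in> {1..I}" "a' k j0 = 1" using that C_def by auto
    then show ?thesis unfolding group_price_def
      using row_single[of J "a' k" j0 "p(j0:=x)"] a'rows j0 by auto
  qed
  have iC: "i \<in> C" using iI j0 ii' unfolding C_def a'_def by auto
  have i'C: "i' \<in> C" using i'I j0 unfolding C_def a'_def by auto
  have gCold: "group_price J p a k = p0" if "k \<in> C" "k \<noteq> i'" for k
  proof -
    have "k \<in> {1..I}" "a k j0 = 1" using that C_def a'_def by auto
    then show ?thesis unfolding group_price_def p0_def
      using row_single[of J "a k" j0 p] a01 asum j0 by auto
  qed
  have gD: "group_price J (p(j0:=x)) a' k = group_price J p a k \<and> n' k = n k \<and> a' k = a k"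
    if "k \<in> D" for k x
  proof -
    have k: "k \<in> {1..I}" "a' k j0 \<noteq> 1" using that C_def D_def by auto
    have "k \<noteq> i'" "k \<noteq> i" using that i'C iC D_def by auto
    then have eq: "a' k = a k" "n' k = n k" unfolding a'_def n'_def by auto
    then have "a k j0 = 0" using k a01 j0 by (metis empty_iff insert_iff)
    then have "(\<Sum>j=1..J. a k j * (p(j0:=x)) j) = (\<Sum>j=1..J. a k j * p j)"
      by (intro sum.cong) auto
    then show ?thesis using eq unfolding group_price_def by simp
  qed
  have dD: "real (n' k) * demand J theta (p(j0:=x)) a' k = r k"
    "real (n' k) * group_price J (p(j0:=x)) a' k * demand J theta (p(j0:=x)) a' k
       = group_price J p a k * r k" if "k \<in> D" for k x
    using gD[OF that, of x] unfolding demand_def r_def by auto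
  have dC: "real (n' k) * demand J theta (p(j0:=x)) a' k = real (n' k) * pos_part (theta k / x - 1)"
    if "k \<in> C" for k x
    using gC[OF that, of x] unfolding demand_def by auto
  have split: "(\<Sum>k=1..I. f k) = (\<Sum>k\<in>D. f k) + (\<Sum>k\<in>C. f k)" for f :: "nat \<Rightarrow> real"
    unfolding D_def by (rule sum.subset_diff[OF CI]) auto
  have rnn: "r k \<ge> 0" for k unfolding r_def using dnn by simp
  have ri'0r: "r i' = 0" using ri'0 r_def by simp
  have rC: "r k = real (n' k) * pos_part (theta k / p0 - 1)" if "k \<in> C" "k \<noteq> i" "k \<noteq> i'" for k
    using gCold[of k] that unfolding r_def demand_def n'_def by simp
  define h where "h k = real (n' k) * pos_part (theta k / p0 - 1) - r k" for k
  have hsum: "A p0 - B = (\<Sum>k\<in>C. h k)"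
    unfolding A_def B_def h_def by (simp add: sum_subtractf)
  have "(\<Sum>k\<in>C. h k) = h i + (\<Sum>k\<in>C-{i}. h k)"
    using iC finC by (intro sum.remove) auto
  also have "(\<Sum>k\<in>C-{i}. h k) = h i' + (\<Sum>k\<in>C-{i}-{i'}. h k)"
    using i'C ii' finC by (intro sum.remove) auto
  also have "(\<Sum>k\<in>C-{i}-{i'}. h k) = 0"
    using rC unfolding h_def by (intro sum.neutral) auto
  finally have hs: "(\<Sum>k\<in>C. h k) = h i + h i'" by simp
  have n'i: "real (n' i) = real (n i) - 1" using ni ii' unfolding n'_def by (simp add: of_nat_diff)
  have hi: "h i = - (theta i / p0 - 1)"
    unfolding h_def n'i r_def di using thi p0pos
    by (simp add: pos_part_def max_def divide_simps algebra_simps)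
  have thi': "theta i' > p0" using thi th by simp
  have hi': "h i' = theta i' / p0 - 1"
    unfolding h_def using ri'0r thi' p0pos unfolding n'_def
    by (simp add: pos_part_def max_def divide_simps)
  have AB: "A p0 > B"
  proof -
    have "A p0 - B = (theta i' - theta i) / p0" using hsum hs hi hi' by (simp add: diff_divide_distrib)
    moreover have "(theta i' - theta i) / p0 > 0" using th p0pos by simp
    ultimately show ?thesis by simp
  qed
  have Bpos: "B > 0"
  proof -
    have "r i \<le> B" unfolding B_def using iC finC rnn by (intro member_le_sum) auto
    moreover have "r i > 0" using effi r_def by simp
    ultimately show ?thesis by simp
  qed
  have Thge: "p0 \<le> Th" unfolding Th_def by (simp add: sum_nonneg)
  have ATh: "A Th = 0"
    unfolding A_def
  proof (intro sum.neutral ballI)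
    fix k assume "k \<in> C"
    then have kI: "k \<in> {1..I}" using CI by auto
    have "theta k \<le> \<bar>theta k\<bar>" by simp
    also have "\<bar>theta k\<bar> \<le> (\<Sum>k=1..I. \<bar>theta k\<bar>)" using kI by (intro member_le_sum) auto
    finally have "theta k \<le> Th" unfolding Th_def using p0pos by simp
    then have "theta k / Th \<le> 1" using p0pos Thge by (simp add: divide_simps)
    then show "real (n' k) * pos_part (theta k / Th - 1) = 0" by (simp add: pos_part_def)
  qed
  have cont: "continuous_on {p0..Th} A"
    unfolding A_def pos_part_def using p0pos
    by (intro continuous_intros) auto
  obtain x where x: "p0 \<le> x" "x \<le> Th" "A x = B"
    using IVT2'[of A Th B p0] ATh Bpos AB Thge cont by force
  have xp0: "x > p0" using x AB by (cases "x = p0") auto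
  define p' where "p' = p(j0:=x)"
  have resnew: "(\<Sum>k=1..I. real (n' k) * demand J theta p' a' k) = (\<Sum>k\<in>D. r k) + B"
    using split[of "\<lambda>k. real (n' k) * demand J theta p' a' k"] dD(1) dC x(3)
    unfolding p'_def A_def by simp
  have resold: "(\<Sum>k=1..I. r k) = (\<Sum>k\<in>D. r k) + B"
    using split[of r] unfolding B_def by simp
  have feas': "feasible S I J N theta p' a' n'"
    unfolding feasible_def
  proof (intro conjI)
    show "\<forall>j\<in>{1..J}. 0 < p' j" using ppos xp0 p0pos unfolding p'_def by auto
    show "\<forall>i\<in>{1..I}. \<forall>j\<in>{1..J}. a' i j \<in> {0, 1}" using a'rows by auto
    show "\<forall>i\<in>{1..I}. (\<Sum>j = 1..J. a' i j) = 1" using a'rows by auto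
    have "n i - 1 \<le> N i" using nN iI by (meson diff_le_self le_trans)
    then show "\<forall>i\<in>{1..I}. n' i \<le> N i" using nN Npos iI i'I unfolding n'_def
      by (auto simp: Suc_le_eq)
    show "(\<Sum>i = 1..I. real (n' i) * demand J theta p' a' i) \<le> S"
      using resnew resold res unfolding r_def by simp
  qed
  have revnew: "revenue I J theta p' a' n' = (\<Sum>k\<in>D. group_price J p a k * r k) + x * B"
  proof -
    have "(\<Sum>k\<in>C. real (n' k) * group_price J p' a' k * demand J theta p' a' k) = x * A x"
      unfolding A_def sum_distrib_left p'_def
      using gC dC by (intro sum.cong) (auto simp: algebra_simps)
    then show ?thesis
      unfolding revenue_def
      using split[of "\<lambda>k. real (n' k) * group_price J p' a' k * demand J theta p' a' k"] dD(2) x(3)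
      unfolding p'_def by simp
  qed
  have revold: "revenue I J theta p a n = (\<Sum>k\<in>D. group_price J p a k * r k) + p0 * B"
  proof -
    have "(\<Sum>k\<in>C. real (n k) * group_price J p a k * demand J theta p a k) = p0 * B"
      unfolding B_def sum_distrib_left
    proof (intro sum.cong refl)
      fix k assume k: "k \<in> C"
      show "real (n k) * group_price J p a k * demand J theta p a k = p0 * r k"
      proof (cases "k = i'")
        case True then show ?thesis using ri'0 ri'0r by auto
      next
        case False then show ?thesis using gCold[OF k] unfolding r_def by simp
      qed
    qed
    moreover have "(\<Sum>k\<in>D. real (n k) * group_price J p a k * demand J theta p a k)
       = (\<Sum>k\<in>D. group_price J p a k * r k)" unfolding r_def by (simp add: algebra_simps)
    ultimately show ?thesis
      unfolding revenue_def
      using split[of "\<lambda>k. real (n k) * group_price J p a k * demand J theta p a k"] by simp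
  qed
  have "revenue I J theta p' a' n' > revenue I J theta p a n"
    using revnew revold xp0 Bpos by simp
  then show ?thesis using feas' by blast
qed

theorem lemma2:
  fixes S :: real and I J :: nat and N :: "nat \<Rightarrow> nat" and theta :: "nat \<Rightarrow> real"
    and p :: "nat \<Rightarrow> real" and a :: "nat \<Rightarrow> nat \<Rightarrow> real" and n :: "nat \<Rightarrow> nat"
  assumes "S > 0" and "I \<ge> 1" and "1 \<le> J" and "J \<le> I"
    and "\<forall>i\<in>{1..I}. N i > 0"
    and "\<forall>i\<in>{1..<I}. theta i > theta (i + 1)"
    and "theta I > 0"
    and "optimal S I J N theta p a n"
  shows "\<exists>K::nat. effective_groups I J theta p a n = {1..K}"
proof -
  define E where "E = effective_groups I J theta p a n"
  have EI: "E \<subseteq> {1..I}" unfolding E_def effective_groups_def by auto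
  have feas: "feasible S I J N theta p a n" and opt:
    "\<And>p' a' n'. feasible S I J N theta p' a' n' \<Longrightarrow>
        revenue I J theta p' a' n' \<le> revenue I J theta p a n"
    using assms(8) unfolding optimal_def by auto
  have down: "i' \<in> E" if iE: "i \<in> E" and i': "1 \<le> i'" "i' < i" for i i'
  proof (rule ccontr)
    assume ni': "i' \<notin> E"
    have iI: "i \<in> {1..I}" using iE EI by auto
    then have i'I: "i' \<in> {1..I}" using i' by auto
    have th: "theta i' > theta i" using theta_mono[OF assms(6)] i' iI by auto
    have effi: "real (n i) * demand J theta p a i > 0" using iE unfolding E_def effective_groups_def by auto
    have neff: "\<not> (real (n i') * demand J theta p a i' > 0)"
      using ni' i'I unfolding E_def effective_groups_def by auto
    obtain p' a' n' where "feasible S I J N theta p' a' n'"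
      "revenue I J theta p' a' n' > revenue I J theta p a n"
      using key[OF feas assms(5) iI i'I th effi neff] by blast
    then show False using opt by fastforce
  qed
  show ?thesis
  proof (cases "E = {}")
    case True then show ?thesis unfolding E_def[symmetric] by (intro exI[of _ 0]) auto
  next
    case False
    have finE: "finite E" using EI finite_subset by blast
    define K where "K = Max E"
    have KE: "K \<in> E" using finE False K_def by simp
    have "E = {1..K}"
    proof
      show "E \<subseteq> {1..K}" using finE EI K_def by auto
      show "{1..K} \<subseteq> E"
      proof
        fix k assume k: "k \<in> {1..K}"
        show "k \<in> E"
        proof (cases "k = K")
          case True then show ?thesis using KE by simp
        next
          case False then show ?thesis using down[OF KE, of k] k by auto
        qed
      qed
    qed
    then show ?thesis unfolding E_def by blast
  qed
qed

end
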